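(* Let $(\mathcal X,\mathcal F,t)$ be an instance of SET-COVER and let $\mathbb G$ be the graph constructed from it as described in the context. If $E'$ is a good 3-completion set of $\mathbb G$, then $\{S_j\in\mathcal F : (S_j,P)\in E'\}$ is a set cover of $\mathcal X$ of size $|E'|$.
   Context: SET-COVER instance $(\mathcal X,\mathcal F,t)$: a finite set $\mathcal X$ of items, a family $\mathcal F$ of nonempty subsets of $\mathcal X$ such that every item lies in some set of $\mathcal F$, and an integer $t$; a set cover is a subfamily $\mathcal S\subseteq\mathcal F$ with $\bigcup_{S\in\mathcal S}S=\mathcal X$. The graph $\mathbb G$ is built as follows: (1) for each set $S_j\in\mathcal F$ add a vertex $S_j$ (set vertex); (2) for each item $x_i\in\mathcal X$ add an item subgraph $I_i$ consisting of $2|\mathcal X|$ new isolated vertices; (3) for each $x_i$ and $S_j$ with $x_i\in S_j$, join $S_j$ to every vertex of $I_i$; (4) for each edge $(S_j,v)$ added in (3), add a new (auxiliary) vertex $w$ adjacent to $S_j$ and $v$; (5) add a common vertex $P$ adjacent to every vertex of every $I_i$. A connected graph has a $(3,1)$-cover if each edge lies in a triangle; a 3-completion set of $\mathbb G$ is a set $E'$ of non-edges of $\mathbb G$ such that $\mathbb G\cup E'$ has a $(3,1)$-cover; it is good if $E'\subseteq\{(S_j,P): S_j\in\mathcal F\}$. *)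

theory Defs
  imports Main
begin

text \<open>Simple undirected graphs: a vertex set and a set of edges, each edge a
  two-element set of vertices.\<close>

definition set_cover_instance :: "'a set \<Rightarrow> 'a set set \<Rightarrow> bool" where
  "set_cover_instance X F \<longleftrightarrow> finite X \<and> (\<forall>S\<in>F. S \<noteq> {} \<and> S \<subseteq> X) \<and> (\<forall>x\<in>X. \<exists>S\<in>F. x \<in> S)"

definition is_set_cover :: "'a set \<Rightarrow> 'a set set \<Rightarrow> 'a set set \<Rightarrow> bool" where
  "is_set_cover X F C \<longleftrightarrow> C \<subseteq> F \<and> \<Union>C = X"

text \<open>Vertices of the constructed graph: set vertices, item vertices
  (item x, copy k), auxiliary vertices (one per edge (S, ItemV x k)), and P.\<close>
datatype 'a vert = SetV "'a set" | ItemV 'a nat | AuxV "'a set" 'a nat | PV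

definition G_verts :: "'a set \<Rightarrow> 'a set set \<Rightarrow> 'a vert set" where
  "G_verts X F =
     SetV ` F
   \<union> {ItemV x k | x k. x \<in> X \<and> k < 2 * card X}
   \<union> {AuxV S x k | S x k. S \<in> F \<and> x \<in> S \<and> k < 2 * card X}
   \<union> {PV}"

definition G_edges :: "'a set \<Rightarrow> 'a set set \<Rightarrow> 'a vert set set" where
  "G_edges X F =
     {{SetV S, ItemV x k} | S x k. S \<in> F \<and> x \<in> S \<and> k < 2 * card X}
   \<union> {{AuxV S x k, SetV S} | S x k. S \<in> F \<and> x \<in> S \<and> k < 2 * card X}
   \<union> {{AuxV S x k, ItemV x k} | S x k. S \<in> F \<and> x \<in> S \<and> k < 2 * card X}
   \<union> {{PV, ItemV x k} | x k. x \<in> X \<and> k < 2 * card X}"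

definition has_31_cover :: "'v set \<Rightarrow> 'v set set \<Rightarrow> bool" where
  "has_31_cover V E \<longleftrightarrow>
     (\<forall>e\<in>E. \<exists>a b c. e = {a, b} \<and> c \<in> V \<and> {a, c} \<in> E \<and> {b, c} \<in> E)"

definition non_edges :: "'v set \<Rightarrow> 'v set set \<Rightarrow> 'v set set" where
  "non_edges V E = {{u, v} | u v. u \<in> V \<and> v \<in> V \<and> u \<noteq> v \<and> {u, v} \<notin> E}"

definition completion_set_3 :: "'v set \<Rightarrow> 'v set set \<Rightarrow> 'v set set \<Rightarrow> bool" where
  "completion_set_3 V E E' \<longleftrightarrow> E' \<subseteq> non_edges V E \<and> has_31_cover V (E \<union> E')"

definition good_completion :: "'a set \<Rightarrow> 'a set set \<Rightarrow> 'a vert set set \<Rightarrow> bool" where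
  "good_completion X F E' \<longleftrightarrow>
     completion_set_3 (G_verts X F) (G_edges X F) E' \<and> E' \<subseteq> {{SetV S, PV} | S. S \<in> F}"

end

theory Submission
  imports Defs
begin

lemma edge_PV: "{PV, c} \<in> G_edges X F \<Longrightarrow> \<exists>y k. c = ItemV y k"
  unfolding G_edges_def by (auto simp: doubleton_eq_iff)
lemma edge_II: "{ItemV x k, ItemV y l} \<notin> G_edges X F"
  unfolding G_edges_def by (auto simp: doubleton_eq_iff)
lemma edge_IS: "{ItemV x k, SetV S} \<in> G_edges X F \<Longrightarrow> x \<in> S"
  unfolding G_edges_def by (auto simp: doubleton_eq_iff)

theorem lemma1:
  fixes X :: "'a set" and F :: "'a set set" and E' :: "'a vert set set"
  assumes "set_cover_instance X F"
    and "good_completion X F E'"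
  shows "is_set_cover X F {S \<in> F. {SetV S, PV} \<in> E'}
         \<and> card {S \<in> F. {SetV S, PV} \<in> E'} = card E'"
proof -
  let ?C = "{S \<in> F. {SetV S, PV} \<in> E'}"
  have sub: "E' \<subseteq> {{SetV S, PV} | S. S \<in> F}"
    and cov: "has_31_cover (G_verts X F) (G_edges X F \<union> E')"
    using assms(2) unfolding good_completion_def completion_set_3_def by auto
  have fin: "finite X" and FX: "\<forall>S\<in>F. S \<noteq> {} \<and> S \<subseteq> X"
    using assms(1) unfolding set_cover_instance_def by auto
  have img: "(\<lambda>S. {SetV S, PV}) ` ?C = E'"
    using sub by auto
  have inj: "inj_on (\<lambda>S. {SetV S, PV}) ?C"
    by (auto simp: inj_on_def doubleton_eq_iff)
  have cardeq: "card ?C = card E'"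
    using card_image[OF inj] img by simp
  have subE: "\<exists>S. e = {SetV S, PV} \<and> S \<in> F" if "e \<in> E'" for e
    using sub that by blast
  have "X \<subseteq> \<Union>?C"
  proof
    fix x assume x: "x \<in> X"
    then have pos: "0 < 2 * card X" using fin by (auto simp: card_gt_0_iff)
    have "{PV, ItemV x 0} \<in> G_edges X F"
      using x pos unfolding G_edges_def by blast
    then have "{PV, ItemV x 0} \<in> G_edges X F \<union> E'" by (rule UnI1)
    with cov have "\<exists>a b c. {PV, ItemV x 0} = {a, b} \<and> c \<in> G_verts X F \<and>
       {a, c} \<in> G_edges X F \<union> E' \<and> {b, c} \<in> G_edges X F \<union> E'"
      unfolding has_31_cover_def by (rule bspec)
    then obtain a b c where e: "{PV, ItemV x 0} = {a, b}"
      and ac: "{a, c} \<in> G_edges X F \<union> E'" and bc: "{b, c} \<in> G_edges X F \<union> E'"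
      by blast
    from e have "(a = PV \<and> b = ItemV x 0) \<or> (a = ItemV x 0 \<and> b = PV)"
      by (auto simp: doubleton_eq_iff)
    then have pc: "{PV, c} \<in> G_edges X F \<union> E'" and ic: "{ItemV x 0, c} \<in> G_edges X F \<union> E'"
      using ac bc by auto
    have notI: "\<not> (\<exists>y k. c = ItemV y k)"
    proof
      assume "\<exists>y k. c = ItemV y k"
      then obtain y k where cy: "c = ItemV y k" by blast
      show False
      proof (cases "{ItemV x 0, c} \<in> E'")
        case True
        then obtain S where "{ItemV x 0, c} = {SetV S, PV}" using subE by blast
        then show False by (auto simp: doubleton_eq_iff)
      next
        case False
        then show False using ic edge_II[of x 0 y k X F] cy by blast
      qed
    qed
    have "\<exists>S. c = SetV S \<and> S \<in> F \<and> {SetV S, PV} \<in> E'"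
    proof (cases "{PV, c} \<in> E'")
      case True
      then obtain S where "{PV, c} = {SetV S, PV}" "S \<in> F" using subE by blast
      then show ?thesis using True by (auto simp: doubleton_eq_iff insert_commute)
    next
      case False
      then show ?thesis using pc edge_PV notI by blast
    qed
    then obtain S where c: "c = SetV S" and S: "S \<in> F" "{SetV S, PV} \<in> E'" by blast
    have "{ItemV x 0, c} \<notin> E'"
    proof
      assume "{ItemV x 0, c} \<in> E'"
      then obtain T where "{ItemV x 0, c} = {SetV T, PV}" using subE by blast
      then show False by (auto simp: doubleton_eq_iff)
    qed
    then have "{ItemV x 0, SetV S} \<in> G_edges X F" using ic c by blast
    then have "x \<in> S" by (rule edge_IS)
    then show "x \<in> \<Union>?C" using S by blast
  qed
  moreover have "\<Union>?C \<subseteq> X" using FX by blast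
  ultimately have "\<Union>?C = X" by (rule equalityI[rotated])
  moreover have "?C \<subseteq> F" by blast
  ultimately show ?thesis unfolding is_set_cover_def using cardeq by blast
qed

end
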